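(* Let $M_\sharp\in\mathbb{R}^{d_1\times d_2}$ have rank $r$ with compact SVD $M_\sharp=U\Lambda V^\top$, and set $X_\sharp=U\sqrt\Lambda$, $Y_\sharp=\sqrt\Lambda V^\top$. Let $\mathcal{A}\colon\mathbb{R}^{d_1\times d_2}\to\mathbb{R}^m$ be linear and $b\in\mathbb{R}^m$, and suppose there exist $\mathcal{I}\subset\{1,\dots,m\}$ and $\kappa_3>0$ with (i) $b_i=\mathcal{A}(M_\sharp)_i$ for all $i\notin\mathcal{I}$, and (ii) $\kappa_3\|W\|_F\le\frac1m\|\mathcal{A}_{\mathcal{I}^c}(W)\|_1-\frac1m\|\mathcal{A}_{\mathcal{I}}(W)\|_1$ for every $W$ of rank at most $2r$. Let $f(X,Y)=\frac1m\|\mathcal{A}(XY)-b\|_1$. Fix $\nu>0$. Then for all $X\in\mathbb{R}^{d_1\times r}$, $Y\in\mathbb{R}^{r\times d_2}$ with $$\max\{\|X-X_\sharp\|_F,\|Y-Y_\sharp\|_F\}\le\nu\sqrt{\sigma_r(M_\sharp)},\qquad\mathrm{dist}\big((X,Y),\mathcal{D}^*(M_\sharp)\big)\le\frac{\sqrt{\sigma_r(M_\sharp)}}{1+2(1+\sqrt2)\nu},$$ we have $$f(X,Y)-f(X_\sharp,Y_\sharp)\ge\frac{\kappa_3\sqrt{\sigma_r(M_\sharp)}}{2+4(1+\sqrt2)\nu}\,\mathrm{dist}\big((X,Y),\mathcal{D}^*(M_\sharp)\big).$$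
   Context: For $\mathcal{J}\subset\{1,\dots,m\}$, $\mathcal{A}_{\mathcal{J}}(W)=(\mathcal{A}(W)_i)_{i\in\mathcal{J}}$. $\mathcal{D}^*(M_\sharp)=\{(X_\sharp A,A^{-1}Y_\sharp):A\in GL(r)\}$ and $\mathrm{dist}((X,Y),\mathcal{D}^*(M_\sharp))=\inf_{A\in GL(r)}\sqrt{\|X-X_\sharp A\|_F^2+\|Y-A^{-1}Y_\sharp\|_F^2}$. $\sigma_r$ is the $r$-th largest singular value. *)

theory Defs
  imports "HOL-Analysis.Analysis"
begin

text \<open>Matrices are HOL-Analysis matrices real^'c^'r (rows 'r, columns 'c).
  The norm on such matrices is the Frobenius norm.\<close>

text \<open>k-th largest singular value (Courant--Fischer min-max definition).\<close>
definition sing_val :: "nat \<Rightarrow> real^'c^'r \<Rightarrow> real" where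
  "sing_val k M = (SUP S\<in>{S :: (real^'c) set. subspace S \<and> dim S = k}.
       (INF x\<in>{x\<in>S. norm x = 1}. norm (M *v x)))"

definition diag_mat :: "('n \<Rightarrow> real) \<Rightarrow> real^'n^'n" where
  "diag_mat d = (\<chi> i j. if i = j then d i else 0)"

definition l1_sub :: "'m set \<Rightarrow> real^'m \<Rightarrow> real" where
  "l1_sub J v = (\<Sum>i\<in>J. \<bar>v $ i\<bar>)"

definition dist_Dstar ::
  "real^'r^'d1 \<Rightarrow> real^'d2^'r \<Rightarrow> real^'r^'d1 \<Rightarrow> real^'d2^'r \<Rightarrow> real" where
  "dist_Dstar Xs Ys X Y = (INF A\<in>{A :: real^'r^'r. invertible A}.
      sqrt ((norm (X - Xs ** A))\<^sup>2 + (norm (Y - matrix_inv A ** Ys))\<^sup>2))"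

end

theory Submission
  imports Defs
begin


lemma norm_sq_rows: "(norm (W::'a::real_normed_vector^'n))^2 = (\<Sum>i\<in>UNIV. (norm (W$i))^2)"
  unfolding norm_vec_def L2_set_def by (simp add: sum_nonneg)

lemma rows_le:
  fixes P :: "'a::real_normed_vector^'n" and Q :: "'b::real_normed_vector^'n"
  assumes "\<And>i. a * norm (P$i) \<le> norm (Q$i)" "0 \<le> a"
  shows "a * norm P \<le> norm Q"
proof -
  have "(a * norm P)^2 = (\<Sum>i\<in>UNIV. (a * norm (P$i))^2)"
    by (simp add: power_mult_distrib norm_sq_rows sum_distrib_left)
  also have "\<dots> \<le> (\<Sum>i\<in>UNIV. (norm (Q$i))^2)"
    by (rule sum_mono) (use assms in \<open>simp add: power_mono\<close>)
  also have "\<dots> = (norm Q)^2" by (simp add: norm_sq_rows)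
  finally show ?thesis by (rule power2_le_imp_le) simp
qed

lemma rows_ge:
  fixes P :: "'a::real_normed_vector^'n" and Q :: "'b::real_normed_vector^'n"
  assumes "\<And>i. norm (Q$i) \<le> a * norm (P$i)" "0 \<le> a"
  shows "norm Q \<le> a * norm P"
proof -
  have "(norm Q)^2 = (\<Sum>i\<in>UNIV. (norm (Q$i))^2)" by (simp add: norm_sq_rows)
  also have "\<dots> \<le> (\<Sum>i\<in>UNIV. (a * norm (P$i))^2)"
    by (rule sum_mono) (use assms in \<open>simp add: power_mono\<close>)
  also have "\<dots> = (a * norm P)^2"
    by (simp add: power_mult_distrib norm_sq_rows sum_distrib_left)
  finally show ?thesis by (rule power2_le_imp_le) (use assms in simp)
qed

lemma norm_sq_entries: "(norm (A::real^'n^'m))^2 = (\<Sum>i\<in>UNIV. \<Sum>j\<in>UNIV. (A$i$j)^2)"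
  by (simp add: norm_sq_rows)

lemma norm_transpose: "norm (transpose (A::real^'n^'m)) = norm A"
proof -
  have "(norm (transpose A))^2 = (\<Sum>i\<in>UNIV. \<Sum>j\<in>UNIV. (A$j$i)^2)"
    unfolding norm_sq_entries by (simp add: transpose_def)
  also have "\<dots> = (\<Sum>j\<in>UNIV. \<Sum>i\<in>UNIV. (A$j$i)^2)" by (rule sum.swap)
  also have "\<dots> = (norm A)^2" by (simp only: norm_sq_entries)
  finally have "(norm (transpose A))^2 = (norm A)^2" .
  then show ?thesis by (simp add: power2_eq_iff_nonneg)
qed

lemma row_mult: "((W::real^'n^'m) ** Z) $ i = transpose Z *v (W $ i)"
  by (auto simp: vec_eq_iff matrix_matrix_mult_def matrix_vector_mult_def transpose_def mult.commute intro!: sum.cong)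

lemma transpose_diff: "transpose (A - B) = transpose A - transpose (B::'a::ab_group_add^'n^'m)"
  by (simp add: vec_eq_iff transpose_def)

lemma transpose_add: "transpose (A + B) = transpose A + transpose (B::'a::ab_group_add^'n^'m)"
  by (simp add: vec_eq_iff transpose_def)

lemma matrix_diff_ldistrib: "(A::'a::ring_1^'n^'m) ** (B - C) = A ** B - A ** C"
  by (simp add: vec_eq_iff matrix_matrix_mult_def sum_subtractf algebra_simps)

lemma matrix_diff_rdistrib: "((B::'a::ring_1^'n^'m) - C) ** A = B ** A - C ** A"
  by (simp add: vec_eq_iff matrix_matrix_mult_def sum_subtractf algebra_simps)

lemma matrix_add_rdistrib: "((B::'a::ring_1^'n^'m) + C) ** A = B ** A + C ** A"
  by (simp add: vec_eq_iff matrix_matrix_mult_def sum.distrib algebra_simps)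

lemma mv_norm_le: "norm ((Z::real^'n^'m) *v w) \<le> norm Z * norm w"
proof -
  have "norm (Z *v w) \<le> norm w * norm Z"
  proof (rule rows_ge)
    fix i
    show "norm ((Z *v w)$i) \<le> norm w * norm (Z$i)"
      using Cauchy_Schwarz_ineq2[of "Z$i" w] by (simp add: matrix_vector_mul_component mult.commute)
  qed simp
  then show ?thesis by (simp add: mult.commute)
qed

lemma isometry:
  fixes G :: "real^'k^'n"
  assumes "transpose G ** G = mat 1"
  shows "norm (G *v v) = norm v"
proof -
  have "(G *v v) \<bullet> (G *v v) = v \<bullet> (transpose G *v (G *v v))"
    by (metis dot_lmul_matrix vector_transpose_matrix)
  also have "\<dots> = v \<bullet> v" using assms by (simp add: matrix_vector_mul_assoc)
  finally show ?thesis by (simp add: norm_eq_sqrt_inner)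
qed

lemma pyth_vec:
  fixes G :: "real^'k^'n"
  assumes "transpose G ** G = mat 1"
  shows "(norm x)^2 = (norm (transpose G *v x))^2 + (norm (x - G *v (transpose G *v x)))^2"
proof -
  define y where "y = transpose G *v x"
  define p where "p = G *v y"
  have "p \<bullet> x = (y v* transpose G) \<bullet> x"
    by (simp only: p_def vector_transpose_matrix)
  also have "\<dots> = y \<bullet> (transpose G *v x)" by (rule dot_lmul_matrix)
  finally have px: "p \<bullet> x = y \<bullet> y" by (simp only: y_def)
  have pp: "p \<bullet> p = y \<bullet> y" unfolding p_def using isometry[OF assms, of y]
    by (simp add: dot_square_norm)
  have "(norm x)^2 = x \<bullet> x" by (simp add: dot_square_norm)
  also have "\<dots> = (p \<bullet> p) + (x - p) \<bullet> (x - p)"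
  proof -
    have "(x - p) \<bullet> (x - p) = x \<bullet> x - x \<bullet> p - (p \<bullet> x - p \<bullet> p)"
      by (simp only: inner_diff_left inner_diff_right)
    moreover have "x \<bullet> p = p \<bullet> x" by (rule inner_commute)
    ultimately show ?thesis using px pp by linarith
  qed
  also have "\<dots> = (norm y)^2 + (norm (x - p))^2"
    by (simp only: pp power2_norm_eq_inner)
  finally have "(norm x)^2 = (norm y)^2 + (norm (x - p))^2" .
  then show ?thesis by (simp only: p_def y_def)
qed

lemma contract:
  fixes G :: "real^'k^'n"
  assumes "transpose G ** G = mat 1"
  shows "norm (transpose G *v x) \<le> norm x"
  proof -
  have "(norm (transpose G *v x))^2 \<le> (norm x)^2"
    using pyth_vec[OF assms, of x] by simp
  then show ?thesis by (rule power2_le_imp_le) simp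
qed


lemma transpose_Q: "transpose (mat 1 - G ** transpose G) = mat 1 - G ** transpose (G::real^'k^'n)"
  by (simp add: transpose_diff matrix_transpose_mul)

lemma rowQ: "((W::real^'n^'m) ** (mat 1 - G ** transpose G)) $ i = W$i - G *v (transpose G *v W$i)"
proof -
  have "((W::real^'n^'m) ** (mat 1 - G ** transpose G)) $ i = (mat 1 - G ** transpose G) *v W$i"
    by (simp only: row_mult transpose_Q)
  also have "\<dots> = W$i - G *v (transpose G *v W$i)"
    by (simp only: matrix_vector_mult_diff_rdistrib matrix_vector_mul_assoc matrix_vector_mul_lid)
  finally show ?thesis .
qed

lemma pyth_right:
  fixes G :: "real^'k^'n" and W :: "real^'n^'m"
  assumes "transpose G ** G = mat 1"
  shows "(norm W)^2 = (norm (W ** G))^2 + (norm (W ** (mat 1 - G ** transpose G)))^2"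
proof -
  have "(norm W)^2 = (\<Sum>i\<in>UNIV. (norm (W$i))^2)" by (rule norm_sq_rows)
  also have "\<dots> = (\<Sum>i\<in>UNIV. (norm ((W ** G)$i))^2 + (norm ((W ** (mat 1 - G ** transpose G))$i))^2)"
    by (rule sum.cong[OF refl]) (subst rowQ, subst row_mult, rule pyth_vec[OF assms])
  also have "\<dots> = (norm (W ** G))^2 + (norm (W ** (mat 1 - G ** transpose G)))^2"
    by (simp only: sum.distrib norm_sq_rows)
  finally show ?thesis .
qed

lemma pyth_left:
  fixes G :: "real^'k^'n" and W :: "real^'m^'n"
  assumes "transpose G ** G = mat 1"
  shows "(norm W)^2 = (norm (transpose G ** W))^2 + (norm ((mat 1 - G ** transpose G) ** W))^2"
proof -
  have "(norm (transpose W))^2 = (norm (transpose W ** G))^2 + (norm (transpose W ** (mat 1 - G ** transpose G)))^2"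
    by (rule pyth_right[OF assms])
  moreover have "transpose W ** G = transpose (transpose G ** W)"
    by (simp only: matrix_transpose_mul transpose_transpose)
  moreover have "transpose W ** (mat 1 - G ** transpose G) = transpose ((mat 1 - G ** transpose G) ** W)"
    by (simp only: matrix_transpose_mul transpose_Q)
  ultimately show ?thesis by (simp only: norm_transpose)
qed

lemma iso_right:
  fixes G :: "real^'k^'n" and W :: "real^'k^'m"
  assumes "transpose G ** G = mat 1"
  shows "norm (W ** transpose G) = norm W"
proof -
  have "(norm (W ** transpose G))^2 = (norm (W ** transpose G ** G))^2 + (norm (W ** transpose G ** (mat 1 - G ** transpose G)))^2"
    by (rule pyth_right[OF assms])
  moreover have h1: "W ** transpose G ** G = W"
    by (simp only: matrix_mul_assoc[symmetric] assms matrix_mul_rid)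
  moreover have "W ** transpose G ** (mat 1 - G ** transpose G) = 0"
    by (simp only: matrix_diff_ldistrib matrix_mul_rid matrix_mul_assoc h1 diff_self)
  ultimately have "(norm (W ** transpose G))^2 = (norm W)^2" by simp
  then show ?thesis by (simp add: power2_eq_iff_nonneg)
qed

lemma iso_left:
  fixes G :: "real^'k^'n" and W :: "real^'m^'k"
  assumes "transpose G ** G = mat 1"
  shows "norm (G ** W) = norm W"
proof -
  have "norm (transpose W ** transpose G) = norm (transpose W)" by (rule iso_right[OF assms])
  then show ?thesis by (simp only: matrix_transpose_mul[symmetric] norm_transpose)
qed

lemma lb_right:
  fixes Z :: "real^'k^'n" and W :: "real^'n^'m"
  assumes "\<And>w. a * norm w \<le> norm (transpose Z *v w)" "0 \<le> a"
  shows "a * norm W \<le> norm (W ** Z)"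
  by (rule rows_le) (simp_all only: row_mult assms)

lemma lb_left:
  fixes Z :: "real^'k^'n" and W :: "real^'m^'k"
  assumes "\<And>w. a * norm w \<le> norm (Z *v w)" "0 \<le> a"
  shows "a * norm W \<le> norm (Z ** W)"
proof -
  have "a * norm (transpose W) \<le> norm (transpose W ** transpose Z)"
    by (rule lb_right) (simp_all only: transpose_transpose assms)
  then show ?thesis by (simp only: matrix_transpose_mul[symmetric] norm_transpose)
qed

lemma diag_mv: "diag_mat d *v w = (\<chi> i. d i * w$i)"
proof -
  have "\<And>i. (\<Sum>j\<in>UNIV. (if i = j then d i else 0) * w$j) = d i * w$i"
  proof -
    fix i
    have "(\<Sum>j\<in>UNIV. (if i = j then d i else 0) * w$j) = (\<Sum>j\<in>UNIV. if i = j then d i * w$i else 0)"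
      by (rule sum.cong) auto
    also have "\<dots> = d i * w$i" by (simp only: sum.delta[OF finite] sum.delta'[OF finite] UNIV_I if_True)
    finally show "(\<Sum>j\<in>UNIV. (if i = j then d i else 0) * w$j) = d i * w$i" .
  qed
  then show ?thesis by (simp add: vec_eq_iff diag_mat_def matrix_vector_mult_def)
qed
lemma diag_mult: "diag_mat a ** diag_mat b = diag_mat (\<lambda>i. a i * b i)"
proof -
  have "\<And>i k. (\<Sum>j\<in>UNIV. (if i = j then a i else 0) * (if j = k then b j else 0)) = (if i = k then a i * b i else 0)"
  proof -
    fix i k
    have "(\<Sum>j\<in>UNIV. (if i = j then a i else 0) * (if j = k then b j else 0)) = (\<Sum>j\<in>UNIV. if i = j then (if i = k then a i * b i else 0) else 0)"
      by (rule sum.cong) auto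
    also have "\<dots> = (if i = k then a i * b i else 0)" by (simp only: sum.delta[OF finite] sum.delta'[OF finite] UNIV_I if_True)
    finally show "(\<Sum>j\<in>UNIV. (if i = j then a i else 0) * (if j = k then b j else 0)) = (if i = k then a i * b i else 0)" .
  qed
  then show ?thesis by (simp add: vec_eq_iff diag_mat_def matrix_matrix_mult_def)
qed
lemma diag_transpose: "transpose (diag_mat d) = diag_mat d"
  by (simp add: vec_eq_iff diag_mat_def transpose_def)
lemma diag_one: "(\<And>i. d i = 1) \<Longrightarrow> diag_mat d = mat 1"
  by (simp add: vec_eq_iff diag_mat_def mat_def)

lemma diag_lb:
  assumes "\<And>i. t \<le> d i" "0 \<le> t"
  shows "t * norm w \<le> norm (diag_mat d *v w)"
proof (rule rows_le)
  fix i
  have "t * \<bar>w$i\<bar> \<le> d i * \<bar>w$i\<bar>" using assms by (simp add: mult_right_mono)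
  also have "\<dots> = \<bar>d i * w$i\<bar>" using assms(1)[of i] assms(2) by (simp add: abs_mult)
  finally show "t * norm (w$i) \<le> norm ((diag_mat d *v w)$i)" by (simp add: diag_mv)
qed (rule assms)

lemma diag_lb_left:
  assumes "\<And>i. t \<le> d i" "0 \<le> t"
  shows "t * norm W \<le> norm (diag_mat d ** W)"
  by (rule lb_left) (simp_all add: diag_lb assms)

lemma diag_lb_right:
  assumes "\<And>i. t \<le> d i" "0 \<le> t"
  shows "t * norm W \<le> norm (W ** diag_mat d)"
  by (rule lb_right) (simp_all only: diag_transpose diag_lb assms)



lemma route1:
  fixes G :: "real^'k^'n" and K :: "real^'k^'n"
  assumes G: "transpose G ** G = mat 1" and s: "\<And>i. t \<le> s i" and t: "0 \<le> t"
  shows "(t - norm (K - G ** diag_mat s)) * norm w \<le> norm ((transpose G ** K) *v w)"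
proof -
  have eq: "transpose G ** K = diag_mat s + transpose G ** (K - G ** diag_mat s)"
    by (simp add: matrix_diff_ldistrib matrix_mul_assoc G)
  have "(transpose G ** K) *v w = diag_mat s *v w + transpose G *v ((K - G ** diag_mat s) *v w)"
    by (simp only: eq matrix_vector_mult_add_rdistrib matrix_vector_mul_assoc)
  then have "norm (diag_mat s *v w) - norm (transpose G *v ((K - G ** diag_mat s) *v w)) \<le> norm ((transpose G ** K) *v w)"
    by (metis norm_diff_ineq)
  moreover have "t * norm w \<le> norm (diag_mat s *v w)" by (rule diag_lb[OF s t])
  moreover have "norm (transpose G *v ((K - G ** diag_mat s) *v w)) \<le> norm (K - G ** diag_mat s) * norm w"
    using contract[OF G, of "(K - G ** diag_mat s) *v w"] mv_norm_le[of "K - G ** diag_mat s" w] by linarith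
  ultimately show ?thesis by (simp add: left_diff_distrib)
qed

lemma route2:
  fixes G :: "real^'k^'n" and K :: "real^'k^'n" and B Bi :: "real^'k^'k"
  assumes G: "transpose G ** G = mat 1" and s: "\<And>i. t \<le> s i" and t: "0 < t"
    and BB: "Bi ** B = mat 1"
    and K: "norm (K - G ** diag_mat s ** B) \<le> \<delta>" and e: "t * norm (Bi - mat 1) \<le> e"
  shows "(t * t / (t + e) - \<delta>) * norm w \<le> norm ((transpose G ** K) *v w)"
proof -
  have eq: "transpose G ** K = diag_mat s ** B + transpose G ** (K - G ** diag_mat s ** B)"
    by (simp add: matrix_diff_ldistrib matrix_mul_assoc G)
  have "(transpose G ** K) *v w = diag_mat s *v (B *v w) + transpose G *v ((K - G ** diag_mat s ** B) *v w)"
    by (simp only: eq matrix_vector_mult_add_rdistrib matrix_vector_mul_assoc)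
  then have 1: "norm (diag_mat s *v (B *v w)) - norm (transpose G *v ((K - G ** diag_mat s ** B) *v w)) \<le> norm ((transpose G ** K) *v w)"
    by (metis norm_diff_ineq)
  have 2: "t * norm (B *v w) \<le> norm (diag_mat s *v (B *v w))" by (rule diag_lb[OF s]) (use t in simp)
  have "norm (transpose G *v ((K - G ** diag_mat s ** B) *v w)) \<le> norm (K - G ** diag_mat s ** B) * norm w"
    using contract[OF G, of "(K - G ** diag_mat s ** B) *v w"] mv_norm_le[of "K - G ** diag_mat s ** B" w] by linarith
  also have "\<dots> \<le> \<delta> * norm w" using K by (simp add: mult_right_mono)
  finally have 3: "norm (transpose G *v ((K - G ** diag_mat s ** B) *v w)) \<le> \<delta> * norm w" .
  have "w = B *v w + (Bi - mat 1) *v (B *v w)"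
    by (simp add: matrix_vector_mult_diff_rdistrib matrix_vector_mul_assoc matrix_diff_rdistrib BB)
  then have "norm w \<le> norm (B *v w) + norm (Bi - mat 1) * norm (B *v w)"
    by (metis mv_norm_le norm_triangle_le add_left_mono)
  then have "t * norm w \<le> t * norm (B *v w) + t * norm (Bi - mat 1) * norm (B *v w)"
    using t by (metis distrib_left mult.assoc mult_left_mono less_imp_le)
  also have "\<dots> \<le> t * norm (B *v w) + e * norm (B *v w)"
    using e by (simp add: mult_right_mono)
  finally have 4: "t * norm w \<le> (t + e) * norm (B *v w)" by (simp add: distrib_right)
  have e0: "0 \<le> e" using e t by (smt (verit) mult_nonneg_nonneg norm_ge_zero)
  have "t * t / (t + e) * norm w = t * ((t * norm w) / (t + e))" by simp
  also have "\<dots> \<le> t * norm (B *v w)"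
    using 4 t e0 by (simp add: divide_le_eq mult.commute)
  finally have 5: "t * t / (t + e) * norm w \<le> t * norm (B *v w)" .
  show ?thesis using 1 2 3 5 by (simp add: left_diff_distrib)
qed

lemma inv_unique:
  fixes A B :: "real^'n^'n"
  assumes "A ** B = mat 1" "B ** A = mat 1"
  shows "matrix_inv A = B"
proof -
  have ex: "\<exists>C. A ** C = mat 1 \<and> C ** A = mat 1" using assms by blast
  define C where "C = matrix_inv A"
  have C: "A ** C = mat 1 \<and> C ** A = mat 1"
    unfolding C_def matrix_inv_def by (rule someI_ex[OF ex])
  have "B = B ** (A ** C)" using C by simp
  also have "\<dots> = C" by (simp add: matrix_mul_assoc assms)
  finally show ?thesis by (simp add: C_def)
qed



lemma dist_nonneg: "0 \<le> dist_Dstar Xs Ys X Y"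
  unfolding dist_Dstar_def
proof (rule cINF_greatest)
  show "{A :: real^'r^'r. invertible A} \<noteq> {}"
    using invertible_def[of "mat 1 :: real^'r^'r"] by auto
qed simp

lemma dist_le:
  assumes "invertible A"
  shows "dist_Dstar Xs Ys X Y \<le> sqrt ((norm (X - Xs ** A))\<^sup>2 + (norm (Y - matrix_inv A ** Ys))\<^sup>2)"
  unfolding dist_Dstar_def
  by (rule cINF_lower) (auto intro!: bdd_belowI2[where m=0] simp: assms)

lemma key_A:
  fixes U :: "real^'r^'d1" and V :: "real^'r^'d2" and X :: "real^'r^'d1" and Y :: "real^'d2^'r"
    and S Si :: "real^'r^'r"
  assumes U: "transpose U ** U = mat 1" and V: "transpose V ** V = mat 1"
    and SSi: "S ** Si = mat 1" and SiS: "Si ** S = mat 1"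
    and a: "0 < a"
    and lbX: "\<And>w. a * norm w \<le> norm ((transpose U ** X) *v w)"
    and lbY: "\<And>w. a * norm w \<le> norm ((transpose V ** transpose Y) *v w)"
  shows "a * dist_Dstar (U ** S) (S ** transpose V) X Y \<le> norm (X ** Y - U ** (S ** S) ** transpose V)"
proof -
  define X1 where "X1 = transpose U ** X"
  define Y1 where "Y1 = Y ** V"
  define E where "E = X ** Y - U ** (S ** S) ** transpose V"
  define Q1 where "Q1 = mat 1 - U ** transpose U"
  define Q2 where "Q2 = mat 1 - V ** transpose V"
  have UU: "\<And>A :: real^'r^'r. A ** transpose U ** U = A" 
    by (simp only: matrix_mul_assoc[symmetric] U matrix_mul_rid)
  have VV: "\<And>A :: real^'r^'r. A ** transpose V ** V = A" 
    by (simp only: matrix_mul_assoc[symmetric] V matrix_mul_rid)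
  have UU2: "\<And>A :: real^'r^'d1. A ** transpose U ** U = A" 
    by (simp only: matrix_mul_assoc[symmetric] U matrix_mul_rid)
  have VV2: "\<And>A :: real^'r^'d2. A ** transpose V ** V = A" 
    by (simp only: matrix_mul_assoc[symmetric] V matrix_mul_rid)
  have X1inj: "\<And>x. X1 *v x = 0 \<Longrightarrow> x = 0"
  proof -
    fix x assume "X1 *v x = 0"
    then have "a * norm x \<le> 0" using lbX[of x] by (simp add: X1_def)
    then show "x = 0" using a by (simp add: mult_le_0_iff)
  qed
  have "invertible X1"
    using X1inj by (simp add: invertible_left_inverse matrix_left_invertible_ker)
  then obtain Xi where X1Xi: "X1 ** Xi = mat 1" and XiX1: "Xi ** X1 = mat 1"
    unfolding invertible_def by blast
  define A where "A = Si ** X1"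
  define Ai where "Ai = Xi ** S"
  have AAi: "A ** Ai = mat 1"
  proof -
    have "A ** Ai = Si ** (X1 ** Xi) ** S" by (simp add: A_def Ai_def matrix_mul_assoc)
    also have "\<dots> = mat 1" by (simp add: X1Xi SiS)
    finally show ?thesis .
  qed
  have AiA: "Ai ** A = mat 1"
  proof -
    have "Ai ** A = Xi ** (S ** Si) ** X1" by (simp add: A_def Ai_def matrix_mul_assoc)
    also have "\<dots> = mat 1" by (simp add: XiX1 SSi)
    finally show ?thesis .
  qed
  have invA: "invertible A" using AAi AiA unfolding invertible_def by blast
  have mi: "matrix_inv A = Ai" by (rule inv_unique[OF AAi AiA])
  define d where "d = dist_Dstar (U ** S) (S ** transpose V) X Y"
  have d0: "0 \<le> d" unfolding d_def by (rule dist_nonneg)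
  have dle: "d \<le> sqrt ((norm (X - (U ** S) ** A))\<^sup>2 + (norm (Y - Ai ** (S ** transpose V)))\<^sup>2)"
    unfolding d_def mi[symmetric] by (rule dist_le[OF invA])
  have eqX: "X - (U ** S) ** A = Q1 ** X"
  proof -
    have "(U ** S) ** A = U ** (S ** Si) ** transpose U ** X"
      by (simp add: A_def X1_def matrix_mul_assoc)
    then show ?thesis by (simp add: SSi Q1_def matrix_diff_rdistrib)
  qed
  have Yd: "(norm (Y - Ai ** (S ** transpose V)))\<^sup>2 = (norm (Xi ** (X1 ** Y1 - S ** S)))\<^sup>2 + (norm (Y ** Q2))\<^sup>2"
  proof -
    have "(norm (Y - Ai ** (S ** transpose V)))\<^sup>2 = (norm ((Y - Ai ** (S ** transpose V)) ** V))\<^sup>2 + (norm ((Y - Ai ** (S ** transpose V)) ** Q2))\<^sup>2"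
      unfolding Q2_def by (rule pyth_right[OF V])
    moreover have "(Y - Ai ** (S ** transpose V)) ** V = Xi ** (X1 ** Y1 - S ** S)"
    proof -
      have "Xi ** (X1 ** Y1 - S ** S) = Xi ** X1 ** Y1 - Xi ** S ** S"
        by (simp add: matrix_diff_ldistrib matrix_mul_assoc)
      also have "\<dots> = Y ** V - Xi ** S ** S" by (simp add: XiX1 Y1_def)
      finally show ?thesis by (simp add: Ai_def matrix_diff_rdistrib matrix_mul_assoc VV)
    qed
    moreover have "(Y - Ai ** (S ** transpose V)) ** Q2 = Y ** Q2"
      by (simp add: Q2_def matrix_diff_rdistrib matrix_diff_ldistrib matrix_mul_assoc VV)
    ultimately show ?thesis by simp
  qed
  have E1: "(norm E)\<^sup>2 = (norm (transpose U ** E))\<^sup>2 + (norm (Q1 ** E))\<^sup>2"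
    unfolding Q1_def by (rule pyth_left[OF U])
  have E2: "(norm (transpose U ** E))\<^sup>2 = (norm (transpose U ** E ** V))\<^sup>2 + (norm (transpose U ** E ** Q2))\<^sup>2"
    unfolding Q2_def by (rule pyth_right[OF V])
  have E3: "(norm (Q1 ** E))\<^sup>2 = (norm (Q1 ** E ** V))\<^sup>2 + (norm (Q1 ** E ** Q2))\<^sup>2"
    unfolding Q2_def by (rule pyth_right[OF V])
  have e1: "transpose U ** E ** V = X1 ** Y1 - S ** S"
    by (simp add: E_def X1_def Y1_def matrix_diff_rdistrib matrix_diff_ldistrib matrix_mul_assoc U VV)
  have e2: "transpose U ** E ** Q2 = X1 ** (Y ** Q2)"
    by (simp add: E_def X1_def Q2_def matrix_diff_rdistrib matrix_diff_ldistrib matrix_mul_assoc U VV)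
  have e3: "Q1 ** E ** V = (Q1 ** X) ** Y1"
    by (simp add: E_def Y1_def Q1_def matrix_diff_rdistrib matrix_diff_ldistrib matrix_mul_assoc UU2 V)
  have lbL: "\<And>Z :: real^'d2^'r. a * norm Z \<le> norm (X1 ** Z)"
    by (rule lb_left) (use lbX a in \<open>simp_all add: X1_def\<close>)
  have lbL2: "\<And>Z :: real^'r^'r. a * norm Z \<le> norm (X1 ** Z)"
    by (rule lb_left) (use lbX a in \<open>simp_all add: X1_def\<close>)
  have lbR: "\<And>Z :: real^'r^'d1. a * norm Z \<le> norm (Z ** Y1)"
    by (rule lb_right) (use lbY a in \<open>simp_all only: Y1_def matrix_transpose_mul less_imp_le\<close>)
  have f1: "a * norm (Xi ** (X1 ** Y1 - S ** S)) \<le> norm (X1 ** Y1 - S ** S)"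
    using lbL2[of "Xi ** (X1 ** Y1 - S ** S)"] by (simp add: matrix_mul_assoc X1Xi)
  have f2: "a * norm (Y ** Q2) \<le> norm (X1 ** (Y ** Q2))" by (rule lbL)
  have f3: "a * norm (Q1 ** X) \<le> norm ((Q1 ** X) ** Y1)" by (rule lbR)
  have sq: "\<And>p q :: real. 0 \<le> p \<Longrightarrow> p \<le> q \<Longrightarrow> p\<^sup>2 \<le> q\<^sup>2" by (simp add: power_mono)
  have "(a * d)\<^sup>2 \<le> a\<^sup>2 * ((norm (Q1 ** X))\<^sup>2 + (norm (Xi ** (X1 ** Y1 - S ** S)))\<^sup>2 + (norm (Y ** Q2))\<^sup>2)"
  proof -
    have "d\<^sup>2 \<le> (norm (Q1 ** X))\<^sup>2 + (norm (Xi ** (X1 ** Y1 - S ** S)))\<^sup>2 + (norm (Y ** Q2))\<^sup>2"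
      using sq[OF d0 dle] eqX Yd by (simp add: add.assoc)
    then show ?thesis by (simp add: power_mult_distrib mult_left_mono)
  qed
  also have "\<dots> = (a * norm (Q1 ** X))\<^sup>2 + (a * norm (Xi ** (X1 ** Y1 - S ** S)))\<^sup>2 + (a * norm (Y ** Q2))\<^sup>2"
    by (simp add: power_mult_distrib distrib_left)
  also have "\<dots> \<le> (norm ((Q1 ** X) ** Y1))\<^sup>2 + (norm (X1 ** Y1 - S ** S))\<^sup>2 + (norm (X1 ** (Y ** Q2)))\<^sup>2"
    using sq[OF _ f1] sq[OF _ f2] sq[OF _ f3] a by (simp add: add_mono)
  also have "\<dots> \<le> (norm E)\<^sup>2"
    using E1 E2 E3 e1 e2 e3 by simp
  finally have "(a * d)\<^sup>2 \<le> (norm E)\<^sup>2" .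
  then have "a * d \<le> norm E" by (rule power2_le_imp_le) simp
  then show ?thesis by (simp add: d_def E_def)
qed



lemma sv_le:
  fixes M :: "real^'d2^'d1" and U :: "real^'r^'d1" and V :: "real^'r^'d2" and lam :: "'r \<Rightarrow> real"
  assumes U: "transpose U ** U = mat 1" and V: "transpose V ** V = mat 1"
    and lam: "\<And>i. 0 \<le> lam i"
    and svd: "M = U ** diag_mat lam ** transpose V"
  shows "sing_val CARD('r) M \<le> lam i0"
  unfolding sing_val_def
proof (rule cSUP_least)
  let ?f = "\<lambda>x::real^'r. V *v x"
  have linf: "linear ?f" by simp
  have injf: "inj_on ?f (span UNIV)"
  proof (rule inj_onI)
    fix x y assume "V *v x = V *v y"
    then have "transpose V *v (V *v x) = transpose V *v (V *v y)" by simp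
    then show "x = y" by (simp only: matrix_vector_mul_assoc V matrix_vector_mul_lid)
  qed
  have "subspace (range ?f)" by (rule linear_subspace_image[OF linf subspace_UNIV])
  moreover have "dim (range ?f) = CARD('r)"
    using dim_image_eq[OF linf injf] by (simp add: dim_UNIV)
  ultimately show "{S :: (real^'d2) set. subspace S \<and> dim S = CARD('r)} \<noteq> {}" by blast
next
  fix S :: "(real^'d2) set"
  assume "S \<in> {S. subspace S \<and> dim S = CARD('r)}"
  then have S: "subspace S" and dS: "dim S = CARD('r)" by auto
  define Z :: "real^'r^'r" where "Z = diag_mat (\<lambda>j. if j = i0 then 0 else 1)"
  let ?h = "\<lambda>x::real^'d2. (Z ** transpose V) *v x"
  have linh: "linear ?h" by simp
  have noninj: "\<not> inj_on ?h S"
  proof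
    assume inj: "inj_on ?h S"
    have d1: "dim (?h ` S) = dim S"
    proof (rule dim_image_eq[OF linh])
      have spanS: "span S = S" by (simp add: S span_eq_iff)
      show "inj_on ?h (span S)" unfolding spanS by (rule inj)
    qed
    moreover have "?h ` S \<subseteq> {y. axis i0 1 \<bullet> y = 0}"
    proof
      fix y assume "y \<in> ?h ` S"
      then obtain x where y: "y = Z *v (transpose V *v x)"
        by (auto simp del: transpose_matrix_vector simp: matrix_vector_mul_assoc)
      have "y $ i0 = 0" unfolding y Z_def diag_mv by simp
      then show "y \<in> {y. axis i0 1 \<bullet> y = 0}" by (simp add: inner_axis')
    qed
    then have d2: "dim (?h ` S) \<le> dim {y::real^'r. axis i0 1 \<bullet> y = 0}" by (rule dim_subset)
    have d3: "dim {y::real^'r. axis i0 1 \<bullet> y = 0} = CARD('r) - 1"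
      by (subst dim_hyperplane) (simp_all add: axis_eq_0_iff)
    have c1: "CARD('r) \<le> CARD('r) - 1" using d1 d2 d3 dS by linarith
    have c2: "0 < CARD('r)" by simp
    show False using c1 c2 by arith
  qed
  then obtain x y where xS: "x \<in> S" and yS: "y \<in> S" and xy: "x \<noteq> y" and hxy: "?h x = ?h y"
    unfolding inj_on_def by blast
  define z where "z = x - y"
  have zS: "z \<in> S" unfolding z_def by (rule subspace_diff[OF S xS yS])
  have z0: "z \<noteq> 0" using xy by (simp add: z_def)
  have hz: "?h z = 0" using hxy by (simp add: z_def matrix_vector_mult_diff_distrib)
  define u where "u = (1 / norm z) *\<^sub>R z"
  have uS: "u \<in> S" unfolding u_def by (rule subspace_scale[OF S zS])
  have nu: "norm u = 1" using z0 by (simp add: u_def)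
  have hu: "?h u = 0" using hz by (simp add: u_def matrix_vector_mult_scaleR)
  define yv where "yv = transpose V *v u"
  have yv0: "\<And>j. j \<noteq> i0 \<Longrightarrow> yv $ j = 0"
  proof -
    fix j assume j: "j \<noteq> i0"
    have "(Z *v yv) $ j = 0" using hu
      by (simp del: transpose_matrix_vector add: yv_def matrix_vector_mul_assoc)
    then show "yv $ j = 0" using j by (simp add: Z_def diag_mv)
  qed
  have "M *v u = U *v (diag_mat lam *v yv)"
    by (simp del: transpose_matrix_vector add: svd yv_def matrix_vector_mul_assoc matrix_mul_assoc)
  then have "norm (M *v u) = norm (diag_mat lam *v yv)" by (simp only: isometry[OF U])
  also have "\<dots> \<le> lam i0 * norm yv"
  proof (rule rows_ge)
    fix j
    show "norm ((diag_mat lam *v yv) $ j) \<le> lam i0 * norm (yv $ j)"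
      using lam[of j] yv0[of j] by (cases "j = i0") (simp_all add: diag_mv abs_mult)
  qed (rule lam)
  also have "\<dots> \<le> lam i0 * 1"
    using contract[OF V, of u] nu lam[of i0] unfolding yv_def by (intro mult_left_mono) simp_all
  finally have Mu: "norm (M *v u) \<le> lam i0" by simp
  show "(INF x\<in>{x \<in> S. norm x = 1}. norm (M *v x)) \<le> lam i0"
    by (rule cINF_lower2[where x=u]) (auto intro!: bdd_belowI2[where m=0] simp: uS nu Mu)
qed



lemma rank_diff_le:
  fixes A B :: "real^'n^'m"
  shows "rank (A - B) \<le> rank A + rank B"
proof -
  let ?S = "range (\<lambda>x. A *v x)" and ?T = "range (\<lambda>x. B *v x)"
  have sS: "subspace ?S" by (rule linear_subspace_image[OF _ subspace_UNIV]) simp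
  have sT: "subspace ?T" by (rule linear_subspace_image[OF _ subspace_UNIV]) simp
  have "range (\<lambda>x. (A - B) *v x) \<subseteq> {x + y |x y. x \<in> ?S \<and> y \<in> ?T}"
  proof
    fix z assume "z \<in> range (\<lambda>x. (A - B) *v x)"
    then obtain x where z: "z = (A - B) *v x" by blast
    have "B *v (- x) = - (B *v x)" by (rule linear_neg[OF matrix_vector_mul_linear])
    then have "z = A *v x + B *v (- x)" by (simp add: z matrix_vector_mult_diff_rdistrib)
    then show "z \<in> {x + y |x y. x \<in> ?S \<and> y \<in> ?T}" by blast
  qed
  then have "rank (A - B) \<le> dim {x + y |x y. x \<in> ?S \<and> y \<in> ?T}"
    unfolding rank_dim_range by (rule dim_subset)
  also have "\<dots> \<le> dim ?S + dim ?T" using dim_sums_Int[OF sS sT] by linarith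
  finally show ?thesis by (simp add: rank_dim_range)
qed

lemma inv_props:
  fixes B :: "real^'n^'n"
  assumes "invertible B"
  shows "B ** matrix_inv B = mat 1 \<and> matrix_inv B ** B = mat 1"
  using assms unfolding invertible_def matrix_inv_def by (rule someI_ex)

lemma f_part:
  fixes \<A> :: "real^'d2^'d1 \<Rightarrow> real^'m" and b :: "real^'m" and W M :: "real^'d2^'d1"
  assumes lin: "linear \<A>"
    and b_out: "\<And>i. i \<notin> I \<Longrightarrow> b $ i = \<A> M $ i"
    and sharp: "\<kappa> * norm W \<le> l1_sub (- I) (\<A> W) / real CARD('m) - l1_sub I (\<A> W) / real CARD('m)"
  shows "\<kappa> * norm W \<le> l1_sub UNIV (\<A> (W + M) - b) / real CARD('m) - l1_sub UNIV (\<A> M - b) / real CARD('m)"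
proof -
  define v where "v = \<A> W"
  define c where "c = \<A> M - b"
  have eq: "\<A> (W + M) - b = v + c" by (simp add: v_def c_def linear_add[OF lin])
  have c0: "\<And>i. i \<notin> I \<Longrightarrow> c $ i = 0" by (simp add: c_def b_out)
  have split: "\<And>z::real^'m. l1_sub UNIV z = l1_sub I z + l1_sub (- I) z"
  proof -
    fix z :: "real^'m"
    have "l1_sub UNIV z = (\<Sum>i\<in>UNIV - I. \<bar>z$i\<bar>) + (\<Sum>i\<in>I. \<bar>z$i\<bar>)"
      unfolding l1_sub_def by (rule sum.subset_diff) simp_all
    then show "l1_sub UNIV z = l1_sub I z + l1_sub (- I) z"
      by (simp add: l1_sub_def Compl_eq_Diff_UNIV)
  qed
  have A: "l1_sub I (v + c) - l1_sub I c \<ge> - l1_sub I v"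
  proof -
    have "l1_sub I (v + c) - l1_sub I c = (\<Sum>i\<in>I. \<bar>v$i + c$i\<bar> - \<bar>c$i\<bar>)"
      by (simp add: l1_sub_def sum_subtractf)
    also have "\<dots> \<ge> (\<Sum>i\<in>I. - \<bar>v$i\<bar>)" by (rule sum_mono) linarith
    finally show ?thesis by (simp add: l1_sub_def sum_negf)
  qed
  have B: "l1_sub (- I) (v + c) = l1_sub (- I) v" "l1_sub (- I) c = 0"
    unfolding l1_sub_def by (auto intro!: sum.neutral sum.cong simp: c0)
  have "l1_sub UNIV (v + c) - l1_sub UNIV c \<ge> l1_sub (- I) v - l1_sub I v"
    using A B split[of "v + c"] split[of c] by linarith
  then have "(l1_sub (- I) v - l1_sub I v) / real CARD('m) \<le> (l1_sub UNIV (v + c) - l1_sub UNIV c) / real CARD('m)"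
    by (simp add: divide_right_mono)
  then show ?thesis using sharp unfolding eq v_def[symmetric] c_def[symmetric]
    by (simp add: diff_divide_distrib)
qed

lemma arith1:
  fixes t \<nu> :: real
  assumes "0 < t" "0 < \<nu>"
  shows "t / (2 + 4 * (1 + sqrt 2) * \<nu>) \<le> t / 2"
proof -
  define D where "D = 2 + 4 * (1 + sqrt 2) * \<nu>"
  have n: "0 \<le> 4 * (1 + sqrt 2) * \<nu>" using assms by simp
  have D2: "2 \<le> D" using n by (simp add: D_def)
  have Dp: "0 < D * 2" using D2 by simp
  have "t / D \<le> t / 2" by (rule divide_left_mono[OF D2 _ Dp]) (use assms in simp)
  then show ?thesis by (simp add: D_def)
qed

lemma arith2:
  fixes t \<nu> \<delta> c :: real
  assumes t: "0 < t" and nu: "1/2 < \<nu>" and c: "c = 1 / (2 + 4 * (1 + sqrt 2) * \<nu>)"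
    and d0: "0 \<le> \<delta>" and d1: "\<delta> \<le> 5/2 * c * t"
  shows "c * t \<le> t * t / (t + (\<delta> + \<nu> * t)) - \<delta>"
proof -
  define q where "q = 1 + sqrt 2"
  have "(7/5) \<le> sqrt 2" by (rule real_le_rsqrt) (simp add: power2_eq_square)
  then have q: "(12/5) \<le> q" by (simp add: q_def)
  define D where "D = 2 + 4 * q * \<nu>"
  have "4 * (12/5) * \<nu> \<le> 4 * q * \<nu>" using q nu by (intro mult_right_mono mult_left_mono) simp_all
  then have D1: "2 + (48/5) * \<nu> \<le> D" by (simp add: D_def)
  then have D2: "(34/5) \<le> D" using nu by linarith
  have cD: "c = 1 / D" by (simp add: c D_def q_def)
  have c0: "0 < c" using D2 cD by simp
  have cle: "c \<le> (3/20)" using D2 cD by (simp add: divide_le_eq)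
  have e1: "(7/2) * (1 + (5/2) * c + \<nu>) = (7/2) + (35/4) * c + (7/2) * \<nu>" by (simp add: algebra_simps)
  have e2: "(35/4) * c \<le> (21/16)" using cle by simp
  have key: "(7/2) * (1 + (5/2) * c + \<nu>) \<le> D" unfolding e1 using D1 e2 nu by linarith
  have cDone: "c * D = 1" using cD D2 by simp
  have k2: "(7/2) * c * (1 + (5/2) * c + \<nu>) \<le> 1"
  proof -
    have h: "c * ((7/2) * (1 + (5/2) * c + \<nu>)) \<le> c * D" using key c0 by (intro mult_left_mono) simp_all
    have "(7/2) * c * (1 + (5/2) * c + \<nu>) = c * ((7/2) * (1 + (5/2) * c + \<nu>))" by (simp only: mult.assoc mult.commute mult.left_commute)
    then show ?thesis using h cDone by linarith
  qed
  have p1: "c * t + \<delta> \<le> (7/2) * c * t" using d1 by linarith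
  have p2: "t + (\<delta> + \<nu> * t) \<le> t * (1 + (5/2) * c + \<nu>)" using d1 by (simp add: algebra_simps)
  have pos: "0 < t + (\<delta> + \<nu> * t)" using t d0 nu by (simp add: add_pos_nonneg)
  have "(c * t + \<delta>) * (t + (\<delta> + \<nu> * t)) \<le> ((7/2) * c * t) * (t * (1 + (5/2) * c + \<nu>))"
    using p1 p2 c0 t d0 nu by (intro mult_mono) (simp_all add: add_nonneg_nonneg)
  also have "\<dots> = t * t * ((7/2) * c * (1 + (5/2) * c + \<nu>))" by (simp add: algebra_simps)
  also have "\<dots> \<le> t * t * 1" using k2 t by (intro mult_left_mono) simp_all
  finally have "(c * t + \<delta>) * (t + (\<delta> + \<nu> * t)) \<le> t * t" by simp
  then have "c * t + \<delta> \<le> t * t / (t + (\<delta> + \<nu> * t))" using pos by (simp add: le_divide_eq)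
  then show ?thesis by linarith
qed



theorem proposition4p7:
  fixes M :: "real^'d2^'d1"
    and U :: "real^'r^'d1" and V :: "real^'r^'d2" and lam :: "'r \<Rightarrow> real"
    and Xs :: "real^'r^'d1" and Ys :: "real^'d2^'r"
    and \<A> :: "real^'d2^'d1 \<Rightarrow> real^'m" and b :: "real^'m"
    and I :: "'m set" and \<kappa>3 \<nu> :: real
    and f :: "real^'r^'d1 \<Rightarrow> real^'d2^'r \<Rightarrow> real"
    and X :: "real^'r^'d1" and Y :: "real^'d2^'r"
  assumes rank_M: "rank M = CARD('r)"
    and U_orth: "transpose U ** U = mat 1"
    and V_orth: "transpose V ** V = mat 1"
    and lam_pos: "\<And>i. lam i > 0"
    and svd: "M = U ** diag_mat lam ** transpose V"
    and Xs_def: "Xs = U ** diag_mat (\<lambda>i. sqrt (lam i))"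
    and Ys_def: "Ys = diag_mat (\<lambda>i. sqrt (lam i)) ** transpose V"
    and lin: "linear \<A>"
    and b_out: "\<And>i. i \<notin> I \<Longrightarrow> b $ i = \<A> M $ i"
    and kappa_pos: "\<kappa>3 > 0"
    and sharpness: "\<And>W. rank W \<le> 2 * CARD('r) \<Longrightarrow>
         \<kappa>3 * norm W \<le> l1_sub (- I) (\<A> W) / real CARD('m) - l1_sub I (\<A> W) / real CARD('m)"
    and f_def: "\<And>X' Y'. f X' Y' = l1_sub UNIV (\<A> (X' ** Y') - b) / real CARD('m)"
    and nu_pos: "\<nu> > 0"
    and close: "max (norm (X - Xs)) (norm (Y - Ys)) \<le> \<nu> * sqrt (sing_val CARD('r) M)"
    and dist_small: "dist_Dstar Xs Ys X Y \<le> sqrt (sing_val CARD('r) M) / (1 + 2 * (1 + sqrt 2) * \<nu>)"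
  shows "f X Y - f Xs Ys \<ge>
    \<kappa>3 * sqrt (sing_val CARD('r) M) / (2 + 4 * (1 + sqrt 2) * \<nu>) * dist_Dstar Xs Ys X Y"
proof -
  define s where "s = (\<lambda>i. sqrt (lam i))"
  define S where "S = diag_mat s"
  define Si where "Si = diag_mat (\<lambda>i. 1 / s i)"
  have spos: "\<And>i. 0 < s i" using lam_pos by (simp add: s_def)
  have SSi: "S ** Si = mat 1"
    unfolding S_def Si_def diag_mult by (rule diag_one) (use spos in \<open>simp add: less_imp_neq[symmetric]\<close>)
  have SiS: "Si ** S = mat 1"
    unfolding S_def Si_def diag_mult by (rule diag_one) (use spos in \<open>simp add: less_imp_neq[symmetric]\<close>)
  have SS: "S ** S = diag_mat lam"
  proof -
    have "(\<lambda>i. s i * s i) = lam" using lam_pos by (auto simp: s_def less_imp_le)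
    then show ?thesis by (simp add: S_def diag_mult)
  qed
  have STr: "transpose S = S" by (simp add: S_def diag_transpose)
  have XsS: "Xs = U ** S" by (simp add: Xs_def S_def s_def)
  have YsS: "Ys = S ** transpose V" by (simp add: Ys_def S_def s_def)
  have M2: "M = U ** (S ** S) ** transpose V" by (simp add: svd SS)
  have XsYs: "Xs ** Ys = M" by (simp add: XsS YsS M2 matrix_mul_assoc)
  define E where "E = X ** Y - M"
  have rankE: "rank E \<le> 2 * CARD('r)"
  proof -
    have "rank (X ** Y) \<le> rank Y" by (rule rank_mul_le_right)
    also have "\<dots> \<le> CARD('r)" using rank_bound[of Y] by simp
    finally have "rank (X ** Y) \<le> CARD('r)" .
    then show ?thesis using rank_diff_le[of "X ** Y" M] rank_M unfolding E_def by linarith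
  qed
  have fpart: "\<kappa>3 * norm E \<le> f X Y - f Xs Ys"
  proof -
    have "\<kappa>3 * norm E \<le> l1_sub UNIV (\<A> (E + M) - b) / real CARD('m) - l1_sub UNIV (\<A> M - b) / real CARD('m)"
      by (rule f_part[OF lin b_out sharpness[OF rankE]])
    moreover have "E + M = X ** Y" by (simp add: E_def)
    ultimately show ?thesis by (simp add: f_def XsYs)
  qed
  have E0: "0 \<le> \<kappa>3 * norm E" using kappa_pos by simp
  define d where "d = dist_Dstar Xs Ys X Y"
  have d0: "0 \<le> d" unfolding d_def by (rule dist_nonneg)
  define sv where "sv = sing_val CARD('r) M"
  define D where "D = 2 + 4 * (1 + sqrt 2) * \<nu>"
  define c where "c = 1 / D"
  have Dpos: "0 < D" using nu_pos by (simp add: D_def add_pos_nonneg)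
  have c0: "0 < c" using Dpos by (simp add: c_def)
  have rhs: "\<kappa>3 * sqrt sv / D * d = \<kappa>3 * (c * sqrt sv * d)" by (simp add: c_def)
  show ?thesis
  proof (cases "sv \<le> 0")
    case True
    then have "sqrt sv \<le> 0" by simp
    then have "c * sqrt sv * d \<le> 0" using c0 d0 by (simp add: mult_nonpos_nonneg mult_nonneg_nonpos)
    then have "\<kappa>3 * (c * sqrt sv * d) \<le> 0" using kappa_pos by (simp add: mult_nonneg_nonpos)
    then show ?thesis using rhs fpart E0 unfolding D_def sv_def d_def by linarith
  next
    case False
    define t where "t = sqrt sv"
    have t0: "0 < t" using False by (simp add: t_def)
    have tle: "\<And>i. t \<le> s i"
    proof -
      fix i
      have "sv \<le> lam i" unfolding sv_def
        by (rule sv_le[OF U_orth V_orth _ svd]) (use lam_pos in \<open>simp add: less_imp_le\<close>)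
      then show "t \<le> s i" by (simp add: t_def s_def)
    qed
    have closeX: "norm (X - U ** diag_mat s) \<le> \<nu> * t"
      using close by (simp add: XsS S_def t_def sv_def)
    have closeY: "norm (Y - S ** transpose V) \<le> \<nu> * t"
      using close by (simp add: YsS t_def sv_def)
    have dsm: "d \<le> 2 * c * t"
    proof -
      have "t / (1 + 2 * (1 + sqrt 2) * \<nu>) = 2 * c * t"
        using Dpos by (simp add: c_def D_def field_simps)
      then show ?thesis using dist_small by (simp add: d_def t_def sv_def)
    qed
    have ex: "\<exists>a. 0 < a \<and> c * t \<le> a \<and> (\<forall>w. a * norm w \<le> norm ((transpose U ** X) *v w))
              \<and> (\<forall>w. a * norm w \<le> norm ((transpose V ** transpose Y) *v w))"
    proof (cases "\<nu> \<le> 1/2")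
      case True
      have ct: "c * t \<le> t / 2" using arith1[OF t0 nu_pos] by (simp add: c_def D_def)
      have "\<nu> * t \<le> 1/2 * t" using True t0 by (intro mult_right_mono) simp_all
      then have a1: "c * t \<le> t - \<nu> * t" using ct by linarith
      have lx: "\<forall>w. (t - \<nu> * t) * norm w \<le> norm ((transpose U ** X) *v w)"
      proof
        fix w :: "real^'r"
        have "(t - \<nu> * t) * norm w \<le> (t - norm (X - U ** diag_mat s)) * norm w"
          using closeX by (intro mult_right_mono) simp_all
        also have "\<dots> \<le> norm ((transpose U ** X) *v w)"
          by (rule route1[OF U_orth tle]) (use t0 in simp)
        finally show "(t - \<nu> * t) * norm w \<le> norm ((transpose U ** X) *v w)" .
      qed
      have ly: "\<forall>w. (t - \<nu> * t) * norm w \<le> norm ((transpose V ** transpose Y) *v w)"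
      proof
        fix w :: "real^'r"
        have "transpose Y - V ** diag_mat s = transpose (Y - S ** transpose V)"
          by (simp add: transpose_diff matrix_transpose_mul STr[unfolded S_def] S_def)
        then have "norm (transpose Y - V ** diag_mat s) \<le> \<nu> * t" using closeY by (simp add: norm_transpose)
        then have "(t - \<nu> * t) * norm w \<le> (t - norm (transpose Y - V ** diag_mat s)) * norm w"
          by (intro mult_right_mono) simp_all
        also have "\<dots> \<le> norm ((transpose V ** transpose Y) *v w)"
          by (rule route1[OF V_orth tle]) (use t0 in simp)
        finally show "(t - \<nu> * t) * norm w \<le> norm ((transpose V ** transpose Y) *v w)" .
      qed
      have "0 < t - \<nu> * t" using c0 t0 a1 by (smt (verit) mult_pos_pos)
      then show ?thesis using a1 lx ly by blast
    next
      case False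
      then have nu2: "1/2 < \<nu>" by simp
      define \<delta> where "\<delta> = d + c * t / 2"
      have inv1: "invertible (mat 1 :: real^'r^'r)" by (auto simp: invertible_def)
      have "d < \<delta>" using c0 t0 by (simp add: \<delta>_def)
      then obtain B :: "real^'r^'r" where Binv: "invertible B"
        and Bd: "sqrt ((norm (X - Xs ** B))\<^sup>2 + (norm (Y - matrix_inv B ** Ys))\<^sup>2) < \<delta>"
        unfolding d_def dist_Dstar_def
        by (subst (asm) cINF_less_iff) (use inv1 in \<open>auto intro!: bdd_belowI2[where m=0]\<close>)
      define Bi where "Bi = matrix_inv B"
      have BBi: "B ** Bi = mat 1" and BiB: "Bi ** B = mat 1" using inv_props[OF Binv] by (simp_all add: Bi_def)
      have nX: "norm (X - Xs ** B) \<le> \<delta>"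
        using Bd real_sqrt_sum_squares_ge1[of "norm (X - Xs ** B)" "norm (Y - matrix_inv B ** Ys)"] by linarith
      have nY: "norm (Y - Bi ** Ys) \<le> \<delta>"
        using Bd real_sqrt_sum_squares_ge2[of "norm (Y - matrix_inv B ** Ys)" "norm (X - Xs ** B)"]
        unfolding Bi_def by linarith
      have dl0: "0 \<le> \<delta>" using d0 c0 t0 by (simp add: \<delta>_def)
      have dl1: "\<delta> \<le> 5/2 * c * t" using dsm by (simp add: \<delta>_def)
      define e where "e = \<delta> + \<nu> * t"
      have eX: "t * norm (Bi - mat 1) \<le> e"
      proof -
        have "t * norm (Bi - mat 1) \<le> norm ((Bi - mat 1) ** diag_mat s)"
          by (rule diag_lb_right[OF tle]) (use t0 in simp)
        also have "\<dots> = norm ((Bi - mat 1) ** S ** transpose V)"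
          unfolding S_def by (rule iso_right[OF V_orth, symmetric])
        also have "(Bi - mat 1) ** S ** transpose V = (Bi ** Ys - Y) + (Y - Ys)"
          by (simp add: YsS matrix_diff_rdistrib matrix_mul_assoc)
        also have "norm ((Bi ** Ys - Y) + (Y - Ys)) \<le> norm (Bi ** Ys - Y) + norm (Y - Ys)"
          by (rule norm_triangle_ineq)
        also have "\<dots> \<le> \<delta> + \<nu> * t"
          using nY closeY by (simp add: norm_minus_commute YsS)
        finally show ?thesis by (simp add: e_def)
      qed
      have eY: "t * norm (transpose B - mat 1) \<le> e"
      proof -
        have "t * norm (transpose B - mat 1) = t * norm (B - mat 1)"
          by (metis norm_transpose transpose_diff transpose_mat)
        also have "\<dots> \<le> norm (diag_mat s ** (B - mat 1))"
          by (rule diag_lb_left[OF tle]) (use t0 in simp)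
        also have "\<dots> = norm (U ** (S ** (B - mat 1)))"
          unfolding S_def by (rule iso_left[OF U_orth, symmetric])
        also have "U ** (S ** (B - mat 1)) = (Xs ** B - X) + (X - Xs)"
          by (simp add: XsS matrix_diff_ldistrib matrix_mul_assoc)
        also have "norm ((Xs ** B - X) + (X - Xs)) \<le> norm (Xs ** B - X) + norm (X - Xs)"
          by (rule norm_triangle_ineq)
        also have "\<dots> \<le> \<delta> + \<nu> * t"
          using nX closeX by (simp add: norm_minus_commute XsS S_def)
        finally show ?thesis by (simp add: e_def)
      qed
      have lx: "\<forall>w. (t * t / (t + e) - \<delta>) * norm w \<le> norm ((transpose U ** X) *v w)"
      proof
        fix w :: "real^'r"
        show "(t * t / (t + e) - \<delta>) * norm w \<le> norm ((transpose U ** X) *v w)"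
          by (rule route2[OF U_orth tle t0 BiB _ eX]) (use nX in \<open>simp add: XsS S_def\<close>)
      qed
      have ly: "\<forall>w. (t * t / (t + e) - \<delta>) * norm w \<le> norm ((transpose V ** transpose Y) *v w)"
      proof
        fix w :: "real^'r"
        have BB': "transpose B ** transpose Bi = mat 1"
          by (simp add: matrix_transpose_mul[symmetric] BiB)
        have "transpose Y - V ** diag_mat s ** transpose Bi = transpose (Y - Bi ** Ys)"
          by (simp add: YsS transpose_diff matrix_transpose_mul STr[unfolded S_def] S_def matrix_mul_assoc)
        then have K: "norm (transpose Y - V ** diag_mat s ** transpose Bi) \<le> \<delta>"
          using nY by (simp add: norm_transpose)
        show "(t * t / (t + e) - \<delta>) * norm w \<le> norm ((transpose V ** transpose Y) *v w)"
          by (rule route2[OF V_orth tle t0 BB' K eY])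
      qed
      have a1: "c * t \<le> t * t / (t + e) - \<delta>"
        unfolding e_def by (rule arith2[OF t0 nu2 _ dl0 dl1]) (simp add: c_def D_def)
      have "0 < t * t / (t + e) - \<delta>" using a1 c0 t0 by (smt (verit) mult_pos_pos)
      then show ?thesis using a1 lx ly by blast
    qed
    then obtain a where a0: "0 < a" and ca: "c * t \<le> a"
      and lbX: "\<And>w. a * norm w \<le> norm ((transpose U ** X) *v w)"
      and lbY: "\<And>w. a * norm w \<le> norm ((transpose V ** transpose Y) *v w)" by blast
    have "a * dist_Dstar (U ** S) (S ** transpose V) X Y \<le> norm (X ** Y - U ** (S ** S) ** transpose V)"
      by (rule key_A[OF U_orth V_orth SSi SiS a0 lbX lbY])
    then have ad: "a * d \<le> norm E" by (simp add: d_def E_def XsS YsS M2)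
    have "c * t * d \<le> a * d" using ca d0 by (rule mult_right_mono)
    then have "c * t * d \<le> norm E" using ad by linarith
    then have "\<kappa>3 * (c * t * d) \<le> \<kappa>3 * norm E" using kappa_pos by (simp add: mult_left_mono)
    then show ?thesis using rhs fpart unfolding D_def sv_def d_def t_def by linarith
  qed
qed


end
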